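(* Let $\{B_i\}_{i \in I}$ be a finite family of subsets of an $n$-element set $\Omega$, let $m \in \{0,\dots,\lfloor n/2\rfloor\}$, let $R$ be a uniformly chosen random $m$-element subset of $\Omega$, and let $\mathcal{B}$ be the event that $B_i \not\subseteq R$ for all $i \in I$. Then for every $\eta \in (0,1)$, \[ \Pr(\mathcal{B}) \ge \prod_{i \in I}\left(1 - \left(\frac{(1+\eta)m}{n}\right)^{|B_i|}\right) - \exp(-\eta^2 m/4). \] *)

theory Defs
  imports "HOL-Probability.Probability"
begin

end

theory Submission
  imports Defs
begin

definition wt :: "'a set \<Rightarrow> real \<Rightarrow> 'a set \<Rightarrow> real" where
  "wt \<Omega> p S = p ^ card S * (1 - p) ^ (card \<Omega> - card S)"

definition mu :: "'a set \<Rightarrow> real \<Rightarrow> 'a set set \<Rightarrow> real" where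
  "mu \<Omega> p D = (\<Sum>S\<in>{S. S \<subseteq> \<Omega> \<and> S \<in> D}. wt \<Omega> p S)"

definition dc :: "'a set set \<Rightarrow> bool" where
  "dc D \<longleftrightarrow> (\<forall>S T. S \<in> D \<longrightarrow> T \<subseteq> S \<longrightarrow> T \<in> D)"

lemma wt_nonneg: "0 \<le> p \<Longrightarrow> p \<le> 1 \<Longrightarrow> 0 \<le> wt \<Omega> p S"
  unfolding wt_def by simp

lemma mu_nonneg: "0 \<le> p \<Longrightarrow> p \<le> 1 \<Longrightarrow> 0 \<le> mu \<Omega> p D"
  unfolding mu_def by (intro sum_nonneg wt_nonneg)

lemma fin_sub: "finite \<Omega> \<Longrightarrow> finite {S. S \<subseteq> \<Omega> \<and> P S}"
  by (rule finite_subset[of _ "Pow \<Omega>"]) auto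

lemma mu_mono: assumes "finite \<Omega>" "0 \<le> p" "p \<le> 1" "D \<subseteq> E" shows "mu \<Omega> p D \<le> mu \<Omega> p E"
  unfolding mu_def using assms by (intro sum_mono2 fin_sub) (auto intro: wt_nonneg)

lemma mu_empty: "mu {} p D = (if {} \<in> D then 1 else 0)"
proof -
  have "{S. S \<subseteq> {} \<and> S \<in> D} = (if {} \<in> D then {{}} else {})" by auto
  then show ?thesis unfolding mu_def by (simp add: wt_def)
qed

lemma mu_insert:
  assumes "finite \<Omega>" "a \<notin> \<Omega>"
  shows "mu (insert a \<Omega>) p D = (1 - p) * mu \<Omega> p D + p * mu \<Omega> p {S. insert a S \<in> D}"
proof -
  let ?A = "{S. S \<subseteq> \<Omega> \<and> S \<in> D}"
  let ?C = "{S. S \<subseteq> \<Omega> \<and> insert a S \<in> D}"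
  have fin: "finite ?A" "finite ?C" using assms(1) by (auto intro: fin_sub)
  have split: "{S. S \<subseteq> insert a \<Omega> \<and> S \<in> D} = ?A \<union> insert a ` ?C"
  proof (rule set_eqI, rule iffI)
    fix S assume "S \<in> {S. S \<subseteq> insert a \<Omega> \<and> S \<in> D}"
    then have S: "S \<subseteq> insert a \<Omega>" "S \<in> D" by auto
    show "S \<in> ?A \<union> insert a ` ?C"
    proof (cases "a \<in> S")
      case True
      then have e: "S = insert a (S - {a})" by auto
      moreover have "S - {a} \<in> ?C" using S True e by auto
      ultimately show ?thesis by blast
    next
      case False then show ?thesis using S by auto
    qed
  qed auto
  have disj: "?A \<inter> insert a ` ?C = {}" using assms(2) by auto
  have inj: "inj_on (insert a) ?C" using assms(2) unfolding inj_on_def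
    by (metis (no_types, lifting) insert_ident mem_Collect_eq subsetD)
  have w1: "wt (insert a \<Omega>) p S = (1 - p) * wt \<Omega> p S" if "S \<subseteq> \<Omega>" for S
  proof -
    have "card S \<le> card \<Omega>" using card_mono assms(1) that by blast
    then have "card (insert a \<Omega>) - card S = Suc (card \<Omega> - card S)" using assms by simp
    then show ?thesis unfolding wt_def by simp
  qed
  have w2: "wt (insert a \<Omega>) p (insert a S) = p * wt \<Omega> p S" if "S \<subseteq> \<Omega>" for S
  proof -
    have fS: "finite S" using that assms(1) finite_subset by blast
    have aS: "a \<notin> S" using that assms(2) by blast
    have "card S \<le> card \<Omega>" using card_mono assms(1) that by blast
    then show ?thesis unfolding wt_def using fS aS assms by simp
  qed
  have "mu (insert a \<Omega>) p D = sum (wt (insert a \<Omega>) p) ?A + sum (wt (insert a \<Omega>) p) (insert a ` ?C)"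
    unfolding mu_def split using fin disj by (simp add: sum.union_disjoint)
  also have "sum (wt (insert a \<Omega>) p) ?A = (1-p) * mu \<Omega> p D"
    unfolding mu_def sum_distrib_left using w1 by (intro sum.cong) auto
  also have "sum (wt (insert a \<Omega>) p) (insert a ` ?C) = p * mu \<Omega> p {S. insert a S \<in> D}"
    unfolding mu_def sum_distrib_left sum.reindex[OF inj] using w2 by (intro sum.cong) auto
  finally show ?thesis .
qed

lemma harris:
  assumes "0 \<le> p" "p \<le> 1"
  shows "finite \<Omega> \<Longrightarrow> dc D \<Longrightarrow> dc E \<Longrightarrow> mu \<Omega> p D * mu \<Omega> p E \<le> mu \<Omega> p (D \<inter> E)"
proof (induction \<Omega> arbitrary: D E rule: finite_induct)
  case empty
  show ?case by (cases "{} \<in> D"; cases "{} \<in> E") (simp_all add: mu_empty)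
next
  case (insert a F)
  let ?D1 = "{S. insert a S \<in> D}" and ?E1 = "{S. insert a S \<in> E}"
  have dcD1: "dc ?D1" unfolding dc_def
  proof (intro allI impI)
    fix S T assume "S \<in> ?D1" "T \<subseteq> S"
    then have "insert a S \<in> D" "insert a T \<subseteq> insert a S" by auto
    then show "T \<in> ?D1" using insert.prems(1) unfolding dc_def by blast
  qed
  have dcE1: "dc ?E1" unfolding dc_def
  proof (intro allI impI)
    fix S T assume "S \<in> ?E1" "T \<subseteq> S"
    then have "insert a S \<in> E" "insert a T \<subseteq> insert a S" by auto
    then show "T \<in> ?E1" using insert.prems(2) unfolding dc_def by blast
  qed
  have subD: "?D1 \<subseteq> D" using insert.prems(1) unfolding dc_def by blast
  have subE: "?E1 \<subseteq> E" using insert.prems(2) unfolding dc_def by blast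
  have eq: "{S. insert a S \<in> D \<inter> E} = ?D1 \<inter> ?E1" by auto
  define x0 where "x0 = mu F p D"
  define x1 where "x1 = mu F p ?D1"
  define y0 where "y0 = mu F p E"
  define y1 where "y1 = mu F p ?E1"
  have x: "x1 \<le> x0" unfolding x0_def x1_def using mu_mono[OF insert.hyps(1) assms subD] .
  have y: "y1 \<le> y0" unfolding y0_def y1_def using mu_mono[OF insert.hyps(1) assms subE] .
  have h0: "x0 * y0 \<le> mu F p (D \<inter> E)" unfolding x0_def y0_def using insert.IH insert.prems by blast
  have h1: "x1 * y1 \<le> mu F p (?D1 \<inter> ?E1)" unfolding x1_def y1_def using insert.IH dcD1 dcE1 by blast
  have alg: "(1-p)*x0*y0 + p*x1*y1 - ((1-p)*x0 + p*x1) * ((1-p)*y0 + p*y1) = p*(1-p)*(x0-x1)*(y0-y1)"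
    by (simp add: algebra_simps)
  have "0 \<le> p*(1-p)*(x0-x1)*(y0-y1)" using assms x y by (intro mult_nonneg_nonneg) auto
  then have "((1-p)*x0 + p*x1) * ((1-p)*y0 + p*y1) \<le> (1-p)*(x0*y0) + p*(x1*y1)"
    using alg by (simp only: mult.assoc)
  also have "\<dots> \<le> (1-p) * mu F p (D \<inter> E) + p * mu F p (?D1 \<inter> ?E1)"
    using h0 h1 assms by (intro add_mono mult_left_mono) auto
  finally show ?case
    unfolding mu_insert[OF insert.hyps] eq x0_def x1_def y0_def y1_def .
qed

lemma mu_UNIV: "finite \<Omega> \<Longrightarrow> mu \<Omega> p UNIV = 1"
  by (induction \<Omega> rule: finite_induct) (simp_all add: mu_empty mu_insert)

lemma mu_sup: "finite \<Omega> \<Longrightarrow> B \<subseteq> \<Omega> \<Longrightarrow> mu \<Omega> p {R. B \<subseteq> R} = p ^ card B"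
proof (induction \<Omega> arbitrary: B rule: finite_induct)
  case empty
  then have "B = {}" by blast
  then show ?case by (simp add: mu_empty)
next
  case (insert a F)
  show ?case
  proof (cases "a \<in> B")
    case True
    have z: "mu F p {R. B \<subseteq> R} = 0"
    proof -
      have "{S. S \<subseteq> F \<and> S \<in> {R. B \<subseteq> R}} = {}" using True insert.hyps(2) by auto
      then show ?thesis unfolding mu_def by (simp only: sum.empty)
    qed
    have e: "{S. insert a S \<in> {R. B \<subseteq> R}} = {R. B - {a} \<subseteq> R}" by auto
    have "B - {a} \<subseteq> F" using insert.prems by auto
    then have i: "mu F p {R. B - {a} \<subseteq> R} = p ^ card (B - {a})" by (rule insert.IH)
    have fB: "finite B" using insert.prems insert.hyps(1) finite_subset by blast
    have c: "card B = Suc (card (B - {a}))" using card_Suc_Diff1[OF fB True] by simp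
    have "mu (insert a F) p {R. B \<subseteq> R} = (1 - p) * mu F p {R. B \<subseteq> R} + p * mu F p {S. insert a S \<in> {R. B \<subseteq> R}}"
      by (rule mu_insert[OF insert.hyps])
    also have "\<dots> = p * p ^ card (B - {a})" unfolding z e i by simp
    also have "\<dots> = p ^ card B" unfolding c by simp
    finally show ?thesis .
  next
    case False
    have e: "{S. insert a S \<in> {R. B \<subseteq> R}} = {R. B \<subseteq> R}" using False by auto
    have "B \<subseteq> F" using insert.prems False by auto
    then have i: "mu F p {R. B \<subseteq> R} = p ^ card B" by (rule insert.IH)
    have "mu (insert a F) p {R. B \<subseteq> R} = (1 - p) * mu F p {R. B \<subseteq> R} + p * mu F p {S. insert a S \<in> {R. B \<subseteq> R}}"
      by (rule mu_insert[OF insert.hyps])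
    also have "\<dots> = p ^ card B" unfolding e i by (simp add: algebra_simps)
    finally show ?thesis .
  qed
qed

lemma mu_compl: assumes "finite \<Omega>" shows "mu \<Omega> p (- D) = 1 - mu \<Omega> p D"
proof -
  have e: "{S. S \<subseteq> \<Omega> \<and> S \<in> UNIV} = {S. S \<subseteq> \<Omega> \<and> S \<in> D} \<union> {S. S \<subseteq> \<Omega> \<and> S \<in> - D}" by auto
  have d: "{S. S \<subseteq> \<Omega> \<and> S \<in> D} \<inter> {S. S \<subseteq> \<Omega> \<and> S \<in> - D} = {}" by auto
  have "mu \<Omega> p UNIV = mu \<Omega> p D + mu \<Omega> p (- D)"
    unfolding mu_def e by (rule sum.union_disjoint[OF fin_sub[OF assms] fin_sub[OF assms] d])
  then show ?thesis using mu_UNIV[OF assms] by simp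
qed

lemma harris_prod:
  assumes "finite \<Omega>" "0 \<le> p" "p \<le> 1"
  shows "finite I \<Longrightarrow> (\<And>i. i \<in> I \<Longrightarrow> dc (D i)) \<Longrightarrow> (\<Prod>i\<in>I. mu \<Omega> p (D i)) \<le> mu \<Omega> p (\<Inter>i\<in>I. D i)"
proof (induction I rule: finite_induct)
  case empty
  then show ?case using mu_UNIV[OF assms(1)] by simp
next
  case (insert j I)
  have dcI: "dc (\<Inter>i\<in>I. D i)" using insert.prems unfolding dc_def by blast
  have "(\<Prod>i\<in>insert j I. mu \<Omega> p (D i)) = mu \<Omega> p (D j) * (\<Prod>i\<in>I. mu \<Omega> p (D i))"
    using insert.hyps by simp
  also have "\<dots> \<le> mu \<Omega> p (D j) * mu \<Omega> p (\<Inter>i\<in>I. D i)"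
    using insert.IH insert.prems mu_nonneg[OF assms(2,3)] by (intro mult_left_mono) auto
  also have "\<dots> \<le> mu \<Omega> p (D j \<inter> (\<Inter>i\<in>I. D i))"
    using harris[OF assms(2,3) assms(1)] insert.prems dcI by blast
  finally show ?case by simp
qed

definition Lay :: "'a set \<Rightarrow> 'a set set \<Rightarrow> nat \<Rightarrow> 'a set set" where
  "Lay \<Omega> D k = {S. S \<subseteq> \<Omega> \<and> card S = k \<and> S \<in> D}"

lemma fin_Lay: "finite \<Omega> \<Longrightarrow> finite (Lay \<Omega> D k)"
  unfolding Lay_def by (rule fin_sub)

lemma count_step:
  assumes fin: "finite \<Omega>" and dcD: "dc D"
  shows "card (Lay \<Omega> D (Suc k)) * Suc k \<le> card (Lay \<Omega> D k) * (card \<Omega> - k)"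
proof -
  define P where "P = Sigma (Lay \<Omega> D (Suc k)) (\<lambda>T. {S. S \<subseteq> T \<and> card S = k})"
  define Q where "Q = Sigma (Lay \<Omega> D k) (\<lambda>S. (\<lambda>x. insert x S) ` (\<Omega> - S))"
  have finT: "finite T" if "T \<in> Lay \<Omega> D j" for T j
    using that fin finite_subset unfolding Lay_def by blast
  have "card P = (\<Sum>T\<in>Lay \<Omega> D (Suc k). card {S. S \<subseteq> T \<and> card S = k})"
    unfolding P_def by (rule card_SigmaI) (auto intro: fin_Lay fin fin_sub finT)
  also have "\<dots> = (\<Sum>T\<in>Lay \<Omega> D (Suc k). Suc k)"
  proof (rule sum.cong)
    fix T assume T: "T \<in> Lay \<Omega> D (Suc k)"
    then have "card T = Suc k" unfolding Lay_def by auto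
    then show "card {S. S \<subseteq> T \<and> card S = k} = Suc k"
      using n_subsets[OF finT[OF T]] binomial_Suc_n by simp
  qed simp
  finally have cP: "card P = card (Lay \<Omega> D (Suc k)) * Suc k" by simp
  have "card Q = (\<Sum>S\<in>Lay \<Omega> D k. card ((\<lambda>x. insert x S) ` (\<Omega> - S)))"
    unfolding Q_def by (rule card_SigmaI) (auto intro: fin_Lay fin)
  also have "\<dots> \<le> (\<Sum>S\<in>Lay \<Omega> D k. card \<Omega> - k)"
  proof (rule sum_mono)
    fix S assume S: "S \<in> Lay \<Omega> D k"
    then have "S \<subseteq> \<Omega>" "card S = k" unfolding Lay_def by auto
    then have "card (\<Omega> - S) = card \<Omega> - k" using fin by (simp add: card_Diff_subset finite_subset)
    then show "card ((\<lambda>x. insert x S) ` (\<Omega> - S)) \<le> card \<Omega> - k"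
      using card_image_le[of "\<Omega> - S" "\<lambda>x. insert x S"] fin by simp
  qed
  finally have cQ: "card Q \<le> card (Lay \<Omega> D k) * (card \<Omega> - k)" by simp
  have finQ: "finite Q" unfolding Q_def using fin by (auto intro: fin_Lay)
  have sub: "(\<lambda>(T, S). (S, T)) ` P \<subseteq> Q"
  proof
    fix z assume "z \<in> (\<lambda>(T, S). (S, T)) ` P"
    then obtain T S where z: "z = (S, T)" and TS: "(T, S) \<in> P" by auto
    then have T: "T \<subseteq> \<Omega>" "card T = Suc k" "T \<in> D" and S: "S \<subseteq> T" "card S = k"
      unfolding P_def Lay_def by auto
    have fT: "finite T" using T fin finite_subset by blast
    have SL: "S \<in> Lay \<Omega> D k" using T S dcD unfolding Lay_def dc_def by blast
    have "T - S \<noteq> {}"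
    proof
      assume "T - S = {}"
      then have "T \<subseteq> S" by blast
      then have "card T \<le> card S" using fT finite_subset card_mono S by blast
      then show False using T S by simp
    qed
    then obtain x where x: "x \<in> T" "x \<notin> S" by blast
    have fS: "finite S" using S fT finite_subset by blast
    have "insert x S \<subseteq> T" using x S by blast
    moreover have "card (insert x S) = card T" using x fS S T by simp
    ultimately have "insert x S = T" using card_subset_eq fT by blast
    then have "T \<in> (\<lambda>x. insert x S) ` (\<Omega> - S)" using x T by blast
    then show "z \<in> Q" unfolding z Q_def using SL by blast
  qed
  have inj: "inj_on (\<lambda>(T, S). (S, T)) P" by (auto simp: inj_on_def)
  have "card P = card ((\<lambda>(T, S). (S, T)) ` P)" using card_image[OF inj] by simp
  also have "\<dots> \<le> card Q" using card_mono[OF finQ sub] .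
  finally show ?thesis using cP cQ by simp
qed

definition fr :: "'a set \<Rightarrow> 'a set set \<Rightarrow> nat \<Rightarrow> real" where
  "fr \<Omega> D k = real (card (Lay \<Omega> D k)) / real (card \<Omega> choose k)"

lemma card_Lay_le: "finite \<Omega> \<Longrightarrow> card (Lay \<Omega> D k) \<le> card \<Omega> choose k"
proof -
  assume fin: "finite \<Omega>"
  have "Lay \<Omega> D k \<subseteq> {S. S \<subseteq> \<Omega> \<and> card S = k}" unfolding Lay_def by auto
  then have "card (Lay \<Omega> D k) \<le> card {S. S \<subseteq> \<Omega> \<and> card S = k}"
    by (rule card_mono[OF fin_sub[OF fin]])
  then show ?thesis using n_subsets[OF fin] by simp
qed

lemma fr_nonneg: "0 \<le> fr \<Omega> D k" unfolding fr_def by simp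

lemma fr_le1: "finite \<Omega> \<Longrightarrow> fr \<Omega> D k \<le> 1"
  unfolding fr_def using card_Lay_le[of \<Omega> D k]
  by (cases "card \<Omega> choose k = 0") (auto simp: divide_le_eq)

lemma fr_step:
  assumes fin: "finite \<Omega>" and dcD: "dc D"
  shows "fr \<Omega> D (Suc k) \<le> fr \<Omega> D k"
proof (cases "k < card \<Omega>")
  case False
  then have "card \<Omega> choose Suc k = 0" by simp
  then have "fr \<Omega> D (Suc k) = 0" unfolding fr_def by simp
  then show ?thesis using fr_nonneg[of \<Omega> D k] by simp
next
  case True
  define n where "n = card \<Omega>"
  define a1 where "a1 = card (Lay \<Omega> D (Suc k))"
  define a0 where "a0 = card (Lay \<Omega> D k)"
  define c1 where "c1 = n choose Suc k"
  define c0 where "c0 = n choose k"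
  have kn: "k < n" using True n_def by simp
  have c0p: "c0 > 0" unfolding c0_def using kn by simp
  have c1p: "c1 > 0" unfolding c1_def using kn by simp
  have id: "c1 * Suc k = c0 * (n - k)" unfolding c1_def c0_def
    using binomial_absorption[of k n] binomial_absorb_comp[of n k] by (simp add: mult.commute)
  have st: "a1 * Suc k \<le> a0 * (n - k)" unfolding a1_def a0_def n_def using count_step[OF fin dcD] .
  have "a1 * c0 * Suc k \<le> a0 * c1 * Suc k"
  proof -
    have "a1 * c0 * Suc k = (a1 * Suc k) * c0" by (simp add: algebra_simps)
    also have "\<dots> \<le> (a0 * (n - k)) * c0" using st by simp
    also have "\<dots> = a0 * (c0 * (n - k))" by (simp add: algebra_simps)
    also have "\<dots> = a0 * c1 * Suc k" using id by (simp add: algebra_simps)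
    finally show ?thesis .
  qed
  then have le: "a1 * c0 \<le> a0 * c1" using mult_le_cancel2[of "a1 * c0" "Suc k" "a0 * c1"] by (simp only:)
  have "real a1 / real c1 \<le> real a0 / real c0"
  proof -
    have "real a1 * real c0 \<le> real a0 * real c1" using le by (metis of_nat_le_iff of_nat_mult)
    then show ?thesis using c0p c1p by (simp add: divide_simps)
  qed
  then show ?thesis unfolding fr_def a1_def a0_def c1_def c0_def n_def .
qed

lemma fr_antimono:
  assumes "finite \<Omega>" "dc D" "m \<le> k"
  shows "fr \<Omega> D k \<le> fr \<Omega> D m"
  using assms(3)
proof (induction k rule: dec_induct)
  case base then show ?case by simp
next
  case (step k) then show ?case using fr_step[OF assms(1,2), of k] by linarith
qed

lemma mu_layers:
  assumes fin: "finite \<Omega>"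
  shows "mu \<Omega> p D = (\<Sum>k\<le>card \<Omega>. real (card (Lay \<Omega> D k)) * (p ^ k * (1 - p) ^ (card \<Omega> - k)))"
proof -
  let ?A = "{S. S \<subseteq> \<Omega> \<and> S \<in> D}"
  have img: "card ` ?A \<subseteq> {..card \<Omega>}" using fin card_mono by fastforce
  have "mu \<Omega> p D = (\<Sum>k\<le>card \<Omega>. sum (wt \<Omega> p) {S \<in> ?A. card S = k})"
    unfolding mu_def by (rule sum.group[symmetric, OF fin_sub[OF fin] _ img]) simp
  also have "\<dots> = (\<Sum>k\<le>card \<Omega>. real (card (Lay \<Omega> D k)) * (p ^ k * (1 - p) ^ (card \<Omega> - k)))"
  proof (rule sum.cong[OF refl])
    fix k
    have e: "{S \<in> ?A. card S = k} = Lay \<Omega> D k" unfolding Lay_def by auto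
    have "sum (wt \<Omega> p) (Lay \<Omega> D k) = sum (\<lambda>S. p ^ k * (1 - p) ^ (card \<Omega> - k)) (Lay \<Omega> D k)"
      by (rule sum.cong) (auto simp: wt_def Lay_def)
    then show "sum (wt \<Omega> p) {S \<in> ?A. card S = k} = real (card (Lay \<Omega> D k)) * (p ^ k * (1 - p) ^ (card \<Omega> - k))"
      unfolding e by simp
  qed
  finally show ?thesis .
qed

lemma mu_bound:
  assumes fin: "finite \<Omega>" and dcD: "dc D" and p: "0 \<le> p" "p \<le> 1" and mn: "m \<le> card \<Omega>"
  shows "mu \<Omega> p D \<le> (\<Sum>k\<le>card \<Omega>. if k < m then real (card \<Omega> choose k) * (p ^ k * (1 - p) ^ (card \<Omega> - k)) else 0)
          + fr \<Omega> D m"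
proof -
  define n where "n = card \<Omega>"
  define b where "b k = real (n choose k) * (p ^ k * (1 - p) ^ (n - k))" for k
  have b0: "0 \<le> b k" for k unfolding b_def using p by simp
  have sb: "(\<Sum>k\<le>n. b k) = 1"
    using binomial_ring[of p "1 - p" n] unfolding b_def by (simp add: mult.assoc)
  have "mu \<Omega> p D = (\<Sum>k\<le>n. fr \<Omega> D k * b k)"
    unfolding mu_layers[OF fin] n_def[symmetric]
  proof (rule sum.cong[OF refl])
    fix k assume "k \<in> {..n}"
    then have "(n choose k) > 0" by simp
    then show "real (card (Lay \<Omega> D k)) * (p ^ k * (1 - p) ^ (n - k)) = fr \<Omega> D k * b k"
      unfolding fr_def b_def n_def by simp
  qed
  also have "\<dots> \<le> (\<Sum>k\<le>n. (if k < m then b k else 0) + fr \<Omega> D m * b k)"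
  proof (rule sum_mono)
    fix k
    show "fr \<Omega> D k * b k \<le> (if k < m then b k else 0) + fr \<Omega> D m * b k"
    proof (cases "k < m")
      case True
      have "fr \<Omega> D k * b k \<le> 1 * b k" using fr_le1[OF fin] b0 by (intro mult_right_mono) auto
      moreover have "0 \<le> fr \<Omega> D m * b k" using fr_nonneg[of \<Omega> D m] b0[of k] by simp
      ultimately show ?thesis using True by simp
    next
      case False
      then show ?thesis using fr_antimono[OF fin dcD, of m k] b0[of k]
        by (simp add: mult_right_mono)
    qed
  qed
  also have "\<dots> = (\<Sum>k\<le>n. if k < m then b k else 0) + fr \<Omega> D m"
    by (simp add: sum.distrib sum_distrib_left[symmetric] sb)
  finally show ?thesis unfolding b_def n_def .
qed

lemma tail_bound:
  assumes p: "0 \<le> p" "p \<le> 1" and r: "0 < r" "r \<le> 1"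
  shows "(\<Sum>k\<le>n. if k < m then real (n choose k) * (p ^ k * (1 - p) ^ (n - k)) else 0)
         \<le> (p * r + (1 - p)) ^ n / r ^ m"
proof -
  define b where "b k = real (n choose k) * (p ^ k * (1 - p) ^ (n - k))" for k
  have b0: "0 \<le> b k" for k unfolding b_def using p by simp
  have "(\<Sum>k\<le>n. if k < m then b k else 0) \<le> (\<Sum>k\<le>n. b k * r ^ k / r ^ m)"
  proof (rule sum_mono)
    fix k
    show "(if k < m then b k else 0) \<le> b k * r ^ k / r ^ m"
    proof (cases "k < m")
      case True
      have "r ^ m \<le> r ^ k" using True r by (intro power_decreasing) auto
      then have "1 \<le> r ^ k / r ^ m" using r by simp
      then have "b k * 1 \<le> b k * (r ^ k / r ^ m)" using b0 by (intro mult_left_mono) auto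
      then show ?thesis using True by simp
    next
      case False
      then show ?thesis using b0[of k] r by simp
    qed
  qed
  also have "\<dots> = (\<Sum>k\<le>n. b k * r ^ k) / r ^ m" by (simp add: sum_divide_distrib)
  also have "(\<Sum>k\<le>n. b k * r ^ k) = (p * r + (1 - p)) ^ n"
    unfolding binomial_ring b_def by (rule sum.cong) (simp_all add: power_mult_distrib)
  finally show ?thesis unfolding b_def .
qed

lemma exp_ineq:
  fixes \<eta> :: real
  assumes "0 < \<eta>" "\<eta> < 1"
  shows "1 + \<eta> \<le> exp (\<eta> - \<eta>^2/4)"
proof -
  define y where "y = \<eta> - \<eta>^2/4"
  have "\<eta> * \<eta> \<le> \<eta>" using mult_left_le[of \<eta> \<eta>] assms by simp
  then have y0: "0 \<le> y" unfolding y_def using assms by (simp add: power2_eq_square)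
  have "1 + y + y^2/2 \<le> exp y" using exp_lower_Taylor_quadratic[OF y0] .
  moreover have "1 + \<eta> \<le> 1 + y + y^2/2"
  proof -
    have a: "(1 - \<eta>/4)^2 \<ge> 1/2"
    proof -
      have "3/4 \<le> 1 - \<eta>/4" using assms by simp
      then have "(3/4::real)^2 \<le> (1 - \<eta>/4)^2" by (intro power_mono) auto
      then show ?thesis by (simp add: power2_eq_square)
    qed
    have "y^2 = \<eta>^2 * (1 - \<eta>/4)^2" unfolding y_def by (simp add: power2_eq_square algebra_simps)
    also have "\<dots> \<ge> \<eta>^2 * (1/2)" using a by (intro mult_left_mono) auto
    finally have "y^2/2 \<ge> \<eta>^2/4" by simp
    then show ?thesis unfolding y_def by simp
  qed
  ultimately show ?thesis unfolding y_def by simp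
qed

theorem lemma3p2:
  fixes \<Omega> :: "'a set" and I :: "'i set" and B :: "'i \<Rightarrow> 'a set"
    and n m :: nat and \<eta> :: real
  assumes "finite \<Omega>" and "card \<Omega> = n"
    and "finite I" and "\<And>i. i \<in> I \<Longrightarrow> B i \<subseteq> \<Omega>"
    and "m \<le> n div 2"
    and "0 < \<eta>" and "\<eta> < 1"
  shows "measure_pmf.prob (pmf_of_set {R. R \<subseteq> \<Omega> \<and> card R = m})
            {R. \<forall>i\<in>I. \<not> B i \<subseteq> R}
         \<ge> (\<Prod>i\<in>I. 1 - ((1 + \<eta>) * real m / real n) ^ card (B i))
            - exp (- (\<eta>^2 * real m / 4))"
proof (cases "m = 0")
  case True
  have "(\<Prod>i\<in>I. 1 - ((1 + \<eta>) * real m / real n) ^ card (B i)) \<le> 1"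
    using True by (intro prod_le_1) (auto simp: power_0_left)
  moreover have "0 \<le> measure_pmf.prob (pmf_of_set {R. R \<subseteq> \<Omega> \<and> card R = m}) {R. \<forall>i\<in>I. \<not> B i \<subseteq> R}"
    by (rule measure_nonneg)
  moreover have "exp (- (\<eta>^2 * real m / 4)) = 1" using True by simp
  ultimately show ?thesis by linarith
next
  case False
  note fin = assms(1)
  let ?M = "{R. R \<subseteq> \<Omega> \<and> card R = m}"
  let ?D = "{R. \<forall>i\<in>I. \<not> B i \<subseteq> R}"
  define p where "p = (1 + \<eta>) * real m / real n"
  define r where "r = 1 / (1 + \<eta>)"
  have m1: "1 \<le> m" using False by simp
  have mn2: "2 * m \<le> n" using assms(5) by simp
  have npos: "0 < n" using m1 mn2 by simp
  have mn: "m \<le> card \<Omega>" using mn2 assms(2) by simp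
  have rn: "real (2 * m) \<le> real n" using mn2 by (simp only: of_nat_le_iff)
  have p0: "0 \<le> p" unfolding p_def using assms(6) by simp
  have p1: "p \<le> 1"
  proof -
    have "(1 + \<eta>) * real m \<le> 2 * real m" using assms(7) by (intro mult_right_mono) auto
    also have "\<dots> \<le> real n" using rn by simp
    finally show ?thesis unfolding p_def using npos by simp
  qed
  have a: "\<eta> * m / n \<le> 1"
  proof -
    have "\<eta> * m \<le> 1 * real m" using assms(7) by (intro mult_right_mono) auto
    also have "\<dots> \<le> n" using rn by simp
    finally show ?thesis using npos by simp
  qed
  have r0: "0 < r" "r \<le> 1" unfolding r_def using assms(6) by auto
  have dci: "dc {R. \<not> B i \<subseteq> R}" for i unfolding dc_def by blast
  have dcD: "dc ?D" unfolding dc_def by blast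
  have eqD: "?D = (\<Inter>i\<in>I. {R. \<not> B i \<subseteq> R})" by auto
  have "(\<Prod>i\<in>I. 1 - p ^ card (B i)) = (\<Prod>i\<in>I. mu \<Omega> p {R. \<not> B i \<subseteq> R})"
  proof (rule prod.cong[OF refl])
    fix i assume i: "i \<in> I"
    have "{R. \<not> B i \<subseteq> R} = - {R. B i \<subseteq> R}" by auto
    then show "1 - p ^ card (B i) = mu \<Omega> p {R. \<not> B i \<subseteq> R}"
      using mu_compl[OF fin] mu_sup[OF fin assms(4)[OF i]] by simp
  qed
  also have "\<dots> \<le> mu \<Omega> p ?D"
    unfolding eqD by (rule harris_prod[OF fin p0 p1 assms(3)]) (rule dci)
  also have "\<dots> \<le> (\<Sum>k\<le>card \<Omega>. if k < m then real (card \<Omega> choose k) * (p ^ k * (1 - p) ^ (card \<Omega> - k)) else 0)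
          + fr \<Omega> ?D m"
    by (rule mu_bound[OF fin dcD p0 p1 mn])
  also have "(\<Sum>k\<le>card \<Omega>. if k < m then real (card \<Omega> choose k) * (p ^ k * (1 - p) ^ (card \<Omega> - k)) else 0)
       \<le> (p * r + (1 - p)) ^ n / r ^ m"
    unfolding assms(2) by (rule tail_bound[OF p0 p1 r0])
  also have "(p * r + (1 - p)) ^ n / r ^ m = (1 + \<eta>) ^ m * (1 - \<eta> * m / n) ^ n"
  proof -
    have ne: "1 + \<eta> \<noteq> 0" using assms(6) by simp
    have pr: "p * r = m / n" unfolding p_def r_def using ne by simp
    have "p * r + (1 - p) = 1 - \<eta> * m / n"
      unfolding pr unfolding p_def using npos by (simp add: field_simps)
    moreover have "1 / r ^ m = (1 + \<eta>) ^ m" unfolding r_def by (simp add: power_divide)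
    ultimately show ?thesis by (metis (no_types, lifting) mult.commute times_divide_eq_left mult_1)
  qed
  also have "\<dots> \<le> exp (m * (\<eta> - \<eta>^2/4)) * exp (- (\<eta> * m))"
  proof (rule mult_mono)
    have "(1 + \<eta>) ^ m \<le> exp (\<eta> - \<eta>^2/4) ^ m"
      using exp_ineq[OF assms(6,7)] assms(6) by (intro power_mono) auto
    then show "(1 + \<eta>) ^ m \<le> exp (m * (\<eta> - \<eta>^2/4))" by (simp add: exp_of_nat_mult)
  next
    have "(1 - \<eta> * m / n) ^ n \<le> exp (- (\<eta> * m / n)) ^ n"
      using exp_ge_add_one_self[of "- (\<eta> * m / n)"] a by (intro power_mono) auto
    also have "\<dots> = exp (real n * (- (\<eta> * m / n)))" by (rule exp_of_nat_mult[symmetric])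
    also have "\<dots> = exp (- (\<eta> * m))" using npos by simp
    finally show "(1 - \<eta> * m / n) ^ n \<le> exp (- (\<eta> * m))" .
  qed (use a in auto)
  also have "exp (m * (\<eta> - \<eta>^2/4)) * exp (- (\<eta> * m)) = exp (- (\<eta>^2 * real m / 4))"
    by (simp add: exp_add[symmetric] algebra_simps)
  also have "fr \<Omega> ?D m = measure_pmf.prob (pmf_of_set ?M) ?D"
  proof -
    have cM: "card ?M = card \<Omega> choose m" by (rule n_subsets[OF fin])
    have ne: "?M \<noteq> {}" using mn cM by (intro notI) simp
    have fM: "finite ?M" by (rule fin_sub[OF fin])
    have "?M \<inter> ?D = Lay \<Omega> ?D m" unfolding Lay_def by auto
    then show ?thesis unfolding fr_def measure_pmf_of_set[OF ne fM] cM
      by (simp only:)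
  qed
  finally show ?thesis unfolding p_def by simp
qed

end
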